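(* Let $S$ be a numerical semigroup. If $d \in S \setminus \{0\}$, then there is an $A \in \mathsf{M}_d(\mathbb{Q})$ such that $\mathcal{S}(A) = S$. In particular, $\dim_{\mathrm{mat}} S \leq m(S) = \min (S \setminus \{0\})$.
   Context: $\mathbb{N} = \{0,1,2,\ldots\}$. A semigroup means an additive subsemigroup of $\mathbb{N}$ containing $0$; a numerical semigroup is a semigroup with finite complement in $\mathbb{N}$. Its multiplicity $m(S)$ is the smallest nonzero element of $S$. $\mathsf{M}_d(X)$ denotes the $d\times d$ matrices with entries in $X$. For $A \in \mathsf{M}_d(\mathbb{Q})$, $\mathcal{S}(A) = \{ n \in \mathbb{N} : A^n \in \mathsf{M}_d(\mathbb{Z})\}$. The matricial dimension $\dim_{\mathrm{mat}} S$ of a semigroup $S$ is the smallest $d$ such that $S = \mathcal{S}(A)$ for some $A \in \mathsf{M}_d(\mathbb{Q})$. *)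

theory Defs
  imports Complex_Main "Jordan_Normal_Form.Matrix"
begin

definition numerical_semigroup :: "nat set \<Rightarrow> bool" where
  "numerical_semigroup S \<longleftrightarrow> 0 \<in> S \<and> (\<forall>a\<in>S. \<forall>b\<in>S. a + b \<in> S) \<and> finite (UNIV - S)"

definition semigroup_multiplicity :: "nat set \<Rightarrow> nat" where
  "semigroup_multiplicity S = (LEAST n. n \<in> S \<and> n \<noteq> 0)"

definition integral_mat :: "rat mat \<Rightarrow> bool" where
  "integral_mat M \<longleftrightarrow> (\<forall>i<dim_row M. \<forall>j<dim_col M. M $$ (i, j) \<in> \<int>)"

definition int_power_set :: "rat mat \<Rightarrow> nat set" where
  "int_power_set A = {n. integral_mat (A ^\<^sub>m n)}"

definition matricial_dim :: "nat set \<Rightarrow> nat" where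
  "matricial_dim S = (LEAST d. \<exists>A \<in> carrier_mat d d. int_power_set A = S)"

end

theory Submission
  imports Defs
begin

lemma powi2_int_iff: "((2::rat) powi e \<in> \<int>) \<longleftrightarrow> e \<ge> 0"
proof
  assume h: "(2::rat) powi e \<in> \<int>"
  show "e \<ge> 0"
  proof (rule ccontr)
    assume "\<not> e \<ge> 0"
    then have e: "(2::rat) powi e = 1 / 2 ^ nat (-e)" "nat (-e) > 0"
      by (auto simp: power_int_def field_simps)
    have "(1::rat) < 2 ^ nat (-e)" using e(2) by (simp add: one_less_power)
    then have "0 < (2::rat) powi e" "(2::rat) powi e < 1" using e(1) by auto
    moreover obtain z where "(2::rat) powi e = of_int z" using h by (auto elim: Ints_cases)
    ultimately have "0 < z" "z < 1" by auto
    then show False by simp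
  qed
next
  assume "e \<ge> 0"
  then show "(2::rat) powi e \<in> \<int>"
    by (simp add: power_int_def)
qed

locale nsg =
  fixes S :: "nat set" and d :: nat
  assumes ns: "numerical_semigroup S" and dS: "d \<in> S" and dpos: "d > 0"
begin

lemma zero_in: "0 \<in> S" and add_in: "a \<in> S \<Longrightarrow> b \<in> S \<Longrightarrow> a + b \<in> S"
  and fin: "finite (UNIV - S)"
  using ns unfolding numerical_semigroup_def by auto

lemma mult_d_in: "k * d \<in> S"
  by (induction k) (auto simp: zero_in add_in dS)

lemma plus_mult_in: "a \<in> S \<Longrightarrow> a + k * d \<in> S"
  using add_in mult_d_in by blast

definition w :: "nat \<Rightarrow> nat" where
  "w n = (LEAST m. m \<in> S \<and> m mod d = n mod d)"

lemma w_ex: "\<exists>m. m \<in> S \<and> m mod d = n mod d"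
proof -
  obtain N where N: "\<forall>m\<ge>N. m \<in> S"
  proof -
    have "finite (UNIV - S)" by (rule fin)
    then obtain N where "\<forall>x\<in>UNIV - S. x < N"
      by (metis finite_nat_set_iff_bounded)
    then show ?thesis using that by (metis Diff_iff UNIV_I not_less)
  qed
  have "N \<le> N * d" using dpos by simp
  then have "n + N * d \<ge> N" by linarith
  then have "n + N * d \<in> S" using N by blast
  moreover have "(n + N * d) mod d = n mod d" by simp
  ultimately show ?thesis by blast
qed

lemma w_props: "w n \<in> S" "w n mod d = n mod d"
  using LeastI_ex[OF w_ex[of n]] unfolding w_def by auto

lemma w_min: "m \<in> S \<Longrightarrow> m mod d = n mod d \<Longrightarrow> w n \<le> m"
  unfolding w_def by (auto intro: Least_le)

lemma w_mod: "w n = w (n mod d)"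
  unfolding w_def by simp

lemma w_plus_d: "w (n + d) = w n"
  using w_mod[of "n+d"] w_mod[of n] by simp

lemma w_0: "w 0 = 0"
  using w_min[of 0 0] zero_in by simp

lemma w_sub: "w (i + n) \<le> w i + w n"
proof -
  have "(w i + w n) mod d = (i + n) mod d"
    using w_props(2)[of i] w_props(2)[of n] by (metis mod_add_eq)
  moreover have "w i + w n \<in> S" using add_in w_props(1) by blast
  ultimately show ?thesis using w_min by blast
qed

lemma in_S_iff: "n \<in> S \<longleftrightarrow> w n \<le> n"
proof
  assume "n \<in> S" then show "w n \<le> n" by (rule w_min) simp
next
  assume h: "w n \<le> n"
  have "d dvd (n - w n)" using w_props(2)[of n] h
    by (metis mod_eq_dvd_iff_nat)
  then obtain k where "n - w n = d * k" by blast
  then have "n = w n + k * d" using h by (metis le_add_diff_inverse mult.commute)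
  then show "n \<in> S" using plus_mult_in[OF w_props(1)] by metis
qed

definition G :: "nat \<Rightarrow> int" where
  "G n = (int n - int (w n)) div int d"

lemma G_mul: "int d * G n = int n - int (w n)"
proof -
  have "int n mod int d = int (w n) mod int d" using w_props(2)[of n]
    by (metis of_nat_mod)
  then have "int d dvd (int n - int (w n))" by (simp add: mod_eq_dvd_iff)
  then show ?thesis unfolding G_def by simp
qed

lemma G_plus_d: "G (n + d) = G n + 1"
proof -
  have "int d * G (n + d) = int d * (G n + 1)"
    using G_mul[of "n+d"] G_mul[of n] w_plus_d[of n] by (simp add: algebra_simps)
  then show ?thesis using dpos by simp
qed

lemma G_mod: "G (k + n) - G k = G (k mod d + n) - G (k mod d)"
proof -
  have q: "G (j + q * d) = G j + int q" for j q
  proof (induction q)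
    case 0 show ?case by simp
  next
    case (Suc q)
    have "j + Suc q * d = (j + q * d) + d" by simp
    then have "G (j + Suc q * d) = G (j + q * d) + 1" using G_plus_d[of "j + q * d"] by metis
    then show ?case using Suc.IH by simp
  qed
  have e1: "k = k mod d + (k div d) * d" using mod_div_mult_eq[of k d] by linarith
  have e2: "k + n = (k mod d + n) + (k div d) * d" using mod_div_mult_eq[of k d] by linarith
  have A: "G (k mod d + k div d * d) = G (k mod d) + int (k div d)" by (rule q)
  have B: "G ((k mod d + n) + k div d * d) = G (k mod d + n) + int (k div d)" by (rule q)
  have C: "G k = G (k mod d) + int (k div d)" using arg_cong[OF e1, of G] A by (rule trans)
  have D: "G (k + n) = G (k mod d + n) + int (k div d)" using arg_cong[OF e2, of G] B by (rule trans)
  show ?thesis using C D by linarith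
qed

lemma G_sub: "G (i + n) - G i \<ge> G n"
proof -
  have "int d * (G (i + n) - G i - G n) = int (w i) + int (w n) - int (w (i + n))"
    using G_mul[of "i+n"] G_mul[of i] G_mul[of n] by (simp add: algebra_simps)
  also have "\<dots> \<ge> 0" using w_sub[of i n] by simp
  finally show ?thesis using dpos by (simp add: zero_le_mult_iff)
qed

lemma G_nonneg_iff: "G n \<ge> 0 \<longleftrightarrow> n \<in> S"
proof -
  have "G n \<ge> 0 \<longleftrightarrow> int d * G n \<ge> 0" using dpos by (simp add: zero_le_mult_iff)
  then show ?thesis using G_mul[of n] in_S_iff by simp
qed

lemma G_0: "G 0 = 0" unfolding G_def by (simp add: w_0)

definition Am :: "rat mat" where
  "Am = mat d d (\<lambda>(j,i). if j = Suc i mod d then 2 powi (G (Suc i) - G i) else 0)"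

lemma Am_carrier: "Am \<in> carrier_mat d d" unfolding Am_def by simp

lemma Am_pow: "Am ^\<^sub>m n = mat d d (\<lambda>(j,i). if j = (i + n) mod d then 2 powi (G (i + n) - G i) else 0)"
proof (induction n)
  case 0
  show ?case unfolding Am_def by (rule eq_matI) auto
next
  case (Suc n)
  show ?case
  proof (rule eq_matI)
    fix j i assume j: "j < dim_row (mat d d (\<lambda>(j,i). if j = (i + Suc n) mod d then (2::rat) powi (G (i + Suc n) - G i) else 0))"
      and i: "i < dim_col (mat d d (\<lambda>(j,i). if j = (i + Suc n) mod d then (2::rat) powi (G (i + Suc n) - G i) else 0))"
    then have j: "j < d" and i: "i < d" by auto
    let ?k = "Suc i mod d"
    have k: "?k < d" using dpos by simp
    have "(Am ^\<^sub>m Suc n) $$ (j, i) = (\<Sum>k\<in>{0..<d}. (Am ^\<^sub>m n) $$ (j,k) * Am $$ (k,i))"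
      using i j Am_carrier by (simp add: Suc scalar_prod_def Am_def)
    also have "\<dots> = (\<Sum>k\<in>{0..<d}. if k = ?k then (Am ^\<^sub>m n) $$ (j,?k) * 2 powi (G (Suc i) - G i) else 0)"
      by (rule sum.cong) (auto simp: Am_def i)
    also have "\<dots> = (Am ^\<^sub>m n) $$ (j,?k) * 2 powi (G (Suc i) - G i)"
      using k by simp
    also have "\<dots> = (if j = (?k + n) mod d then 2 powi (G (?k + n) - G ?k) else 0) * 2 powi (G (Suc i) - G i)"
      using j k by (simp add: Suc)
    also have "\<dots> = (if j = (i + Suc n) mod d then 2 powi (G (i + Suc n) - G i) else 0)"
    proof -
      have e1: "(?k + n) mod d = (i + Suc n) mod d" by (simp add: mod_add_left_eq)
      have "G (?k + n) - G ?k = G (Suc i + n) - G (Suc i)" using G_mod[of "Suc i" n] by simp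
      then have "(2::rat) powi (G (?k + n) - G ?k) * 2 powi (G (Suc i) - G i) = 2 powi (G (i + Suc n) - G i)"
        by (simp add: power_int_add[symmetric])
      then show ?thesis using e1 by simp
    qed
    finally show "(Am ^\<^sub>m Suc n) $$ (j, i) = mat d d (\<lambda>(j,i). if j = (i + Suc n) mod d then (2::rat) powi (G (i + Suc n) - G i) else 0) $$ (j, i)"
      using i j by simp
  qed (simp_all add: Am_def)
qed

lemma Am_S: "int_power_set Am = S"
proof -
  have "integral_mat (Am ^\<^sub>m n) \<longleftrightarrow> n \<in> S" for n
  proof
    assume h: "integral_mat (Am ^\<^sub>m n)"
    have dims: "dim_row (Am ^\<^sub>m n) = d" "dim_col (Am ^\<^sub>m n) = d" by (simp_all add: Am_pow)
    have lt: "n mod d < d" "0 < d" using dpos by simp_all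
    have "(Am ^\<^sub>m n) $$ (n mod d, 0) \<in> \<int>" using h lt
      unfolding integral_mat_def dims by blast
    then have "(2::rat) powi (G n - G 0) \<in> \<int>" using dpos by (simp add: Am_pow)
    then show "n \<in> S" using G_0 G_nonneg_iff powi2_int_iff by simp
  next
    assume "n \<in> S"
    then have g: "G n \<ge> 0" using G_nonneg_iff by simp
    show "integral_mat (Am ^\<^sub>m n)" unfolding integral_mat_def
    proof (intro allI impI)
      fix j i assume "j < dim_row (Am ^\<^sub>m n)" "i < dim_col (Am ^\<^sub>m n)"
      then have "j < d" "i < d" by (simp_all add: Am_pow)
      moreover have "G (i + n) - G i \<ge> G n" by (rule G_sub)
      then have "G (i + n) - G i \<ge> 0" using g by linarith
      ultimately show "(Am ^\<^sub>m n) $$ (j, i) \<in> \<int>"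
        by (simp add: Am_pow powi2_int_iff)
    qed
  qed
  then show ?thesis unfolding int_power_set_def by auto
qed

end

theorem theorem2p2:
  fixes S :: "nat set"
  assumes "numerical_semigroup S"
  shows "(\<forall>d \<in> S - {0}. \<exists>A \<in> carrier_mat d d. int_power_set A = S)
         \<and> matricial_dim S \<le> semigroup_multiplicity S"
proof -
  have 1: "\<forall>d \<in> S - {0}. \<exists>A \<in> carrier_mat d d. int_power_set A = S"
  proof
    fix d assume "d \<in> S - {0}"
    then interpret nsg S d using assms by unfold_locales auto
    show "\<exists>A \<in> carrier_mat d d. int_power_set A = S" using Am_carrier Am_S by blast
  qed
  have "\<exists>n. n \<in> S \<and> n \<noteq> 0"
  proof -
    have "finite (UNIV - S)" using assms unfolding numerical_semigroup_def by auto
    then have "infinite S" using finite_UnI[of S "UNIV - S"] by auto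
    then have "\<not> S \<subseteq> {0}" using finite_subset by blast
    then show ?thesis by blast
  qed
  then have m: "semigroup_multiplicity S \<in> S - {0}"
    unfolding semigroup_multiplicity_def by (metis (mono_tags, lifting) DiffI LeastI_ex singletonD)
  then have "\<exists>A \<in> carrier_mat (semigroup_multiplicity S) (semigroup_multiplicity S). int_power_set A = S"
    using 1 by blast
  then have "matricial_dim S \<le> semigroup_multiplicity S"
    unfolding matricial_dim_def by (rule Least_le)
  then show ?thesis using 1 by blast
qed

end
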